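(* $\mathcal{L}$ is closed under weak limits: if $\mu_n\in\mathcal{L}$ and $\mu_n\to\mu$ weakly for a probability measure $\mu$ on $\mathbb{R}$, then $\mu\in\mathcal{L}$.
   Context: For a probability measure $\mu$ on $\mathbb{R}$, $G_\mu(z)=\int\frac{d\mu(x)}{z-x}$ and $F_\mu=1/G_\mu$ on the upper half-plane $\mathbb{C}^+$. $\mathcal{L}$ is the set of probability measures $\mu$ on $\mathbb{R}$ with $F_\mu(z+2\pi)=F_\mu(z)+2\pi$ for all $z\in\mathbb{C}^+$. *)

theory Defs
  imports "HOL-Probability.Probability"
begin

definition cauchy_G :: "real measure \<Rightarrow> complex \<Rightarrow> complex" where
  "cauchy_G M z = (LINT x|M. 1 / (z - complex_of_real x))"

definition cauchy_F :: "real measure \<Rightarrow> complex \<Rightarrow> complex" where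
  "cauchy_F M z = 1 / cauchy_G M z"

definition class_L :: "real measure set" where
  "class_L = {M. real_distribution M \<and>
     (\<forall>z. Im z > 0 \<longrightarrow> cauchy_F M (z + 2 * complex_of_real pi) = cauchy_F M z + 2 * complex_of_real pi)}"

end

theory Submission
  imports Defs
begin

lemma norm_kernel_bound:
  assumes "Im z > 0"
  shows "norm (1 / (z - complex_of_real x)) \<le> 1 / Im z"
proof -
  have "Im z \<le> cmod (z - complex_of_real x)"
    using abs_Im_le_cmod[of "z - complex_of_real x"] assms by simp
  moreover have "cmod (z - complex_of_real x) > 0" using assms
    by (metis calculation less_le_trans)
  ultimately show ?thesis using assms by (simp add: norm_divide divide_simps)
qed

lemma isCont_kernel:
  assumes "Im z > 0"
  shows "isCont (\<lambda>x. 1 / (z - complex_of_real x)) x"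
proof -
  have "z - complex_of_real x \<noteq> 0" using assms by (auto simp: complex_eq_iff)
  then show ?thesis by (intro continuous_intros) auto
qed

lemma G_nonzero:
  assumes M: "real_distribution M" and z: "Im z > 0"
  shows "cauchy_G M z \<noteq> 0"
proof -
  interpret real_distribution M by fact
  define g where "g x = Im z / ((Re z - x)^2 + (Im z)^2)" for x
  have gpos: "g x > 0" for x using z unfolding g_def by (auto intro!: divide_pos_pos add_nonneg_pos)
  have Imk: "Im (1 / (z - complex_of_real x)) = - g x" for x
    unfolding g_def by (simp add: Im_divide complex_norm_square[symmetric] cmod_def power2_eq_square)
  have gcont: "continuous_on UNIV g"
    unfolding g_def using z by (intro continuous_intros) (auto simp: add_nonneg_pos)
  have gmeas: "g \<in> borel_measurable M"
    using gcont by (simp add: borel_measurable_continuous_onI)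
  have gbd: "norm (g x) \<le> 1 / Im z" for x
  proof -
    have "norm (g x) = norm (Im (1 / (z - complex_of_real x)))" using Imk[of x] by simp
    also have "\<dots> \<le> norm (1 / (z - complex_of_real x))" using abs_Im_le_cmod by (simp only: real_norm_def)
    also have "\<dots> \<le> 1 / Im z" by (rule norm_kernel_bound[OF z])
    finally show ?thesis .
  qed
  have gint: "integrable M g"
    by (rule integrable_const_bound[where B="1 / Im z"]) (use gbd gmeas in auto)
  have nz: "integral\<^sup>L M g \<noteq> 0"
  proof
    assume "integral\<^sup>L M g = 0"
    then have "AE x in M. g x = 0"
      using integral_nonneg_eq_0_iff_AE[OF gint] gpos by (auto intro: less_imp_le)
    then have "AE x in M. False" using gpos by (auto elim: AE_mp simp: less_le)
    then show False using AE_False by auto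
  qed
  have kmeas: "(\<lambda>x. 1 / (z - complex_of_real x)) \<in> borel_measurable M"
    using isCont_kernel[OF z]
    by (auto intro!: borel_measurable_continuous_onI continuous_at_imp_continuous_on)
  have kint: "integrable M (\<lambda>x. 1 / (z - complex_of_real x))"
    by (rule integrable_const_bound[where B="1 / Im z"]) (use norm_kernel_bound[OF z] kmeas in auto)
  have "Im (cauchy_G M z) = - integral\<^sup>L M g"
    unfolding cauchy_G_def integral_Im[OF kint, symmetric] by (simp add: Imk)
  then show ?thesis using nz by auto
qed

lemma G_conv:
  assumes "\<And>n. real_distribution (Ms n)" "real_distribution M" "weak_conv_m Ms M"
    and z: "Im z > 0"
  shows "(\<lambda>n. cauchy_G (Ms n) z) \<longlonglongrightarrow> cauchy_G M z"
  unfolding cauchy_G_def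
  by (rule weak_conv_imp_integral_bdd_continuous_conv[OF assms(1-3), where B="1 / Im z"])
     (use isCont_kernel[OF z] norm_kernel_bound[OF z] in auto)

theorem proposition3p14:
  fixes M_seq :: "nat \<Rightarrow> real measure" and M :: "real measure"
  assumes "\<And>n. M_seq n \<in> class_L"
    and "real_distribution M"
    and "weak_conv_m M_seq M"
  shows "M \<in> class_L"
proof -
  have rd: "\<And>n. real_distribution (M_seq n)" using assms(1) by (simp add: class_L_def)
  have per: "\<And>n z. Im z > 0 \<Longrightarrow> cauchy_F (M_seq n) (z + 2 * complex_of_real pi) = cauchy_F (M_seq n) z + 2 * complex_of_real pi"
    using assms(1) by (simp add: class_L_def)
  have Fconv: "(\<lambda>n. cauchy_F (M_seq n) z) \<longlonglongrightarrow> cauchy_F M z" if z: "Im z > 0" for z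
    unfolding cauchy_F_def
    by (intro tendsto_divide tendsto_const G_conv[OF rd assms(2,3) z] G_nonzero[OF assms(2) z])
  have "cauchy_F M (z + 2 * complex_of_real pi) = cauchy_F M z + 2 * complex_of_real pi"
    if z: "Im z > 0" for z
  proof -
    have z2: "Im (z + 2 * complex_of_real pi) > 0" using z by simp
    have "(\<lambda>n. cauchy_F (M_seq n) (z + 2 * complex_of_real pi)) \<longlonglongrightarrow> cauchy_F M z + 2 * complex_of_real pi"
      unfolding per[OF z] by (intro tendsto_add Fconv[OF z] tendsto_const)
    from LIMSEQ_unique[OF Fconv[OF z2] this] show ?thesis .
  qed
  then show ?thesis using assms(2) by (simp add: class_L_def)
qed

end
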